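(* For every integer $\alpha\geq1$ and every $\epsilon\in(0,1)$ there is an uncertain priors coding scheme $(E,D)$ (using a shared uniformly random string $R$) such that for every $P\in\Delta(M)$ the expected code length satisfies \[ \mathbb{E}_{m\sim P,R}\big[|E(m,\alpha,R,P)|\big]\leq H(P)+\log\alpha+\log\tfrac{1}{\epsilon}+1, \] and for every $Q\in\Delta(M)$ satisfying $Q(x)\geq P(x)/\alpha$ for all $x\in M$ (in particular, every $Q$ that is $\alpha$-close to $P$), \[ \Pr_{m\sim P,R}\big[D(E(m,\alpha,R,P),\alpha,R,Q)=m\big]\geq1-\epsilon. \]
   Context: All logarithms are base 2. $M$ is a (finite or countable) message set, $\Delta(M)$ the probability distributions on $M$, and $H(P)=\sum_x P(x)\log\frac{1}{P(x)}$ the entropy. $P,Q$ are $\alpha$-close if $\frac1\alpha Q(x)\leq P(x)\leq\alpha Q(x)$ for all $x$. A coding scheme consists of an encoder $E:M\times\mathbb{N}\times\{0,1\}^{\mathbb{N}}\times\Delta(M)\to\{0,1\}^*$ (message, $\alpha$, shared random string, sender's prior) and a decoder $D:\{0,1\}^*\times\mathbb{N}\times\{0,1\}^{\mathbb{N}}\times\Delta(M)\to M$ (codeword, $\alpha$, shared random string, receiver's prior). *)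

theory Defs
  imports "HOL-Probability.Probability"
begin

definition coin_space :: "(nat \<Rightarrow> bool) measure" where
  "coin_space = PiM UNIV (\<lambda>_::nat. measure_pmf (bernoulli_pmf (1/2)))"

text \<open>Shannon entropy in bits (base-2 logarithm), valued in ennreal so that it may be infinite
  for distributions on a countable message set.\<close>
definition entropy2 :: "'a pmf \<Rightarrow> ennreal" where
  "entropy2 P = (\<integral>\<^sup>+ x. ennreal (pmf P x * log 2 (1 / pmf P x)) \<partial>count_space UNIV)"

end

theory Submission
  imports Defs
begin

abbreviation "BB \<equiv> measure_pmf (bernoulli_pmf (1/2))"

lemma coin_prob: "prob_space coin_space"
  unfolding coin_space_def by (intro prob_space_PiM prob_space_measure_pmf)

lemma space_coin[simp]: "space coin_space = UNIV"
  unfolding coin_space_def by (simp add: space_PiM)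

lemma hb: "emeasure BB {b} = ennreal (1/2)"
  by (cases b) (auto simp: emeasure_pmf_single)

lemma cyl:
  assumes J: "finite J" and inv: "\<And>r r'. restrict r J = restrict r' J \<Longrightarrow> r \<in> X \<Longrightarrow> r' \<in> X"
  shows "X \<in> sets coin_space \<and> emeasure coin_space X = ennreal (real (card ((\<lambda>r. restrict r J) ` X)) * (1/2)^card J)"
proof -
  define F where "F = (\<lambda>r. restrict r J) ` X"
  define C where "C f = prod_emb UNIV (\<lambda>_. BB) J (PiE J (\<lambda>j. {f j}))" for f :: "nat \<Rightarrow> bool"
  have FPi: "F \<subseteq> PiE J (\<lambda>_. UNIV)" unfolding F_def by auto
  have finF: "finite F" using finite_subset[OF FPi] J by (simp add: finite_PiE)
  have Cmem: "r \<in> C f \<longleftrightarrow> restrict r J = f" if "f \<in> PiE J (\<lambda>_. UNIV)" for r f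
    using that unfolding C_def prod_emb_def
    by (auto simp: space_PiM PiE_iff extensional_def fun_eq_iff)
  have Xeq: "X = (\<Union>f\<in>F. C f)"
  proof safe
    fix r assume "r \<in> X" thus "r \<in> (\<Union>f\<in>F. C f)" using Cmem FPi unfolding F_def by blast
  next
    fix f r assume "f \<in> F" "r \<in> C f"
    then obtain r0 where "r0 \<in> X" "f = restrict r0 J" unfolding F_def by auto
    have "f \<in> PiE J (\<lambda>_. UNIV)" using FPi \<open>f \<in> F\<close> by blast
    hence "restrict r J = f" using Cmem \<open>r \<in> C f\<close> by blast
    thus "r \<in> X" using inv[of r0 r] \<open>r0 \<in> X\<close> \<open>f = restrict r0 J\<close> by simp
  qed
  have Csets: "C f \<in> sets coin_space" for f
    unfolding C_def coin_space_def by (rule sets_PiM_I) (use J in auto)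
  have disj: "disjoint_family_on C F"
    unfolding disjoint_family_on_def
  proof (intro ballI impI)
    fix f g assume fg: "f \<in> F" "g \<in> F" "f \<noteq> g"
    hence "f \<in> PiE J (\<lambda>_. UNIV)" "g \<in> PiE J (\<lambda>_. UNIV)" using FPi by auto
    thus "C f \<inter> C g = {}" using Cmem[of f] Cmem[of g] fg(3) by auto
  qed
  have Cmeas: "emeasure coin_space (C f) = ennreal ((1/2)^card J)" for f
  proof -
    have "emeasure coin_space (C f) = (\<Prod>j\<in>J. emeasure BB {f j})"
      unfolding C_def coin_space_def
      by (rule emeasure_PiM_emb) (use J in \<open>auto intro: prob_space_measure_pmf\<close>)
    also have "\<dots> = (\<Prod>j\<in>J. ennreal (1/2))"
      by (intro prod.cong refl) (simp add: hb)
    also have "\<dots> = ennreal ((1/2)^card J)" by (subst prod_ennreal) auto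
    finally show ?thesis .
  qed
  have "emeasure coin_space X = (\<Sum>f\<in>F. emeasure coin_space (C f))"
    unfolding Xeq by (rule sum_emeasure[symmetric]) (use Csets disj finF in auto)
  also have "\<dots> = ennreal (real (card F) * (1/2)^card J)" using Cmeas by (simp add: ennreal_mult ennreal_of_nat_eq_real_of_nat)
  moreover have "(\<Union>f\<in>F. C f) \<in> sets coin_space" using finF Csets by (intro sets.finite_UN) auto
  ultimately show ?thesis using Xeq unfolding F_def by simp
qed

definition enc :: "'a::countable \<Rightarrow> nat \<Rightarrow> nat" where
  "enc x i = prod_encode (to_nat x, i)"

definition hash :: "(nat \<Rightarrow> bool) \<Rightarrow> 'a::countable \<Rightarrow> nat \<Rightarrow> bool list" where
  "hash r x l = map (\<lambda>i. r (enc x i)) [0..<l]"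

lemma enc_eq[simp]: "enc x i = enc y j \<longleftrightarrow> x = y \<and> i = j"
  unfolding enc_def by simp

lemma hash_eq_iff: "hash r x l = hash r' y l \<longleftrightarrow> (\<forall>i<l. r (enc x i) = r' (enc y i))"
  unfolding hash_def by (simp add: list_eq_iff_nth_eq)

lemma hash_cong: "(\<And>i. i < l \<Longrightarrow> r (enc x i) = r' (enc x i)) \<Longrightarrow> hash r x l = hash r' x l"
  unfolding hash_def by simp

lemma half_pow: "(2::real)^l * (1/2)^(2*l) = (1/2)^l"
proof -
  have "(2::real)^l * (1/2)^(2*l) = ((2::real)^l * (1/2)^l) * (1/2)^l"
    by (simp only: mult_2 power_add mult.assoc)
  also have "(2::real)^l * (1/2)^l = 1" by (simp flip: power_mult_distrib)
  finally show ?thesis by simp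
qed

lemma collision:
  fixes x m :: "'a::countable"
  assumes "x \<noteq> m"
  shows "{r. hash r x l = hash r m l} \<in> sets coin_space \<and>
         emeasure coin_space {r. hash r x l = hash r m l} \<le> ennreal ((1/2)^l)"
proof -
  define X where "X = {r. hash r x l = hash r m l}"
  define T where "T = enc m ` {..<l}"
  define J where "J = enc x ` {..<l} \<union> T"
  have injx: "inj_on (enc z) A" for z :: 'a and A by (auto intro: inj_onI)
  have cT: "card T = l" unfolding T_def using card_image[OF injx] by simp
  have cJ: "card J = 2 * l" unfolding J_def T_def
    by (subst card_Un_disjoint) (use assms in \<open>auto simp: card_image[OF injx]\<close>)
  have finJ: "finite J" unfolding J_def T_def by auto
  have inv: "r' \<in> X" if "restrict r J = restrict r' J" "r \<in> X" for r r'
  proof -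
    have "r j = r' j" if "j \<in> J" for j using \<open>restrict r J = restrict r' J\<close> that
      by (metis restrict_apply')
    hence rj: "r j = r' j" if "j \<in> J" for j using that by blast
    have "r' (enc x i) = r' (enc m i)" if "i < l" for i
    proof -
      have "enc x i \<in> J" "enc m i \<in> J" using that unfolding J_def T_def by auto
      hence "r' (enc x i) = r (enc x i)" "r' (enc m i) = r (enc m i)" using rj by auto
      moreover have "r (enc x i) = r (enc m i)" using \<open>r \<in> X\<close> that unfolding X_def hash_eq_iff by auto
      ultimately show ?thesis by simp
    qed
    thus ?thesis unfolding X_def hash_eq_iff by auto
  qed
  note cy = cyl[OF finJ inv]
  define F where "F = (\<lambda>r. restrict r J) ` X"
  have "inj_on (\<lambda>g. restrict g T) F"
  proof (rule inj_onI)
    fix g g' assume "g \<in> F" "g' \<in> F" and eq: "restrict g T = restrict g' T"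
    then obtain r r' where rr: "r \<in> X" "r' \<in> X" "g = restrict r J" "g' = restrict r' J"
      unfolding F_def by auto
    have T: "r j = r' j" if "j \<in> T" for j
      using fun_cong[OF eq, of j] that rr(3,4) unfolding J_def by auto
    show "g = g'"
    proof
      fix j show "g j = g' j"
      proof (cases "j \<in> J")
        case False thus ?thesis using rr by simp
      next
        case True
        then consider "j \<in> T" | i where "i < l" "j = enc x i" unfolding J_def by auto
        thus ?thesis
        proof cases
          case 1 thus ?thesis using T rr True by simp
        next
          case 2
          have "r j = r (enc m i)" "r' j = r' (enc m i)" using rr(1,2) 2 unfolding X_def hash_eq_iff by auto
          moreover have "enc m i \<in> T" unfolding T_def using 2 by auto
          ultimately show ?thesis using T rr True by simp
        qed
      qed
    qed
  qed
  moreover have "(\<lambda>g. restrict g T) ` F \<subseteq> PiE T (\<lambda>_. UNIV)" by auto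
  moreover have "finite T" unfolding T_def by auto
  ultimately have "card F \<le> card (PiE T (\<lambda>_. UNIV :: bool set))"
    by (intro card_inj_on_le) (auto simp: finite_PiE)
  also have "\<dots> = 2 ^ l" using \<open>finite T\<close> by (simp add: card_PiE cT)
  finally have cF: "card F \<le> 2 ^ l" .
  have "real (card F) * (1/2)^card J \<le> 2^l * (1/2)^(2*l)"
  proof -
    have "real (card F) \<le> real (2^l)" using cF by (simp only: of_nat_le_iff)
    thus ?thesis unfolding cJ by (intro mult_right_mono) auto
  qed
  also have "\<dots> = (1/2::real)^l" by (rule half_pow)
  finally have "real (card F) * (1/2)^card J \<le> (1/2::real)^l" .
  hence le0: "ennreal (real (card F) * (1/2)^card J) \<le> ennreal ((1/2)^l)" by (rule ennreal_leI)
  have eX: "emeasure coin_space X = ennreal (real (card F) * (1/2)^card J)"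
    unfolding F_def by (rule conjunct2[OF cy])
  have le: "emeasure coin_space X \<le> ennreal ((1/2)^l)" unfolding eX by (rule le0)
  show ?thesis unfolding X_def[symmetric] by (rule conjI[OF conjunct1[OF cy] le])
qed

lemma length_hash[simp]: "length (hash r x l) = l"
  unfolding hash_def by simp

lemma level_bound:
  fixes Q :: "'a pmf" and c :: real
  assumes c: "c > 0" and F: "finite F" "F \<subseteq> {x. c \<le> pmf Q x}"
  shows "real (card F) * c \<le> 1"
proof -
  have "real (card F) * c \<le> sum (pmf Q) F" using F by (intro sum_bounded_below) auto
  also have "\<dots> = measure (measure_pmf Q) F" using F by (simp add: measure_measure_pmf_finite)
  also have "\<dots> \<le> 1" by (rule measure_pmf.prob_le_1)
  finally show ?thesis .
qed

lemma level_fin: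
  fixes Q :: "'a pmf" and c :: real
  assumes c: "c > 0"
  shows "finite {x. c \<le> pmf Q x} \<and> real (card {x. c \<le> pmf Q x}) * c \<le> 1"
proof -
  have fin: "finite {x. c \<le> pmf Q x}"
  proof (rule ccontr)
    assume "infinite {x. c \<le> pmf Q x}"
    then obtain B where B: "finite B" "card B = nat \<lceil>1/c\<rceil> + 1" "B \<subseteq> {x. c \<le> pmf Q x}"
      using infinite_arbitrarily_large by blast
    have "real (card B) * c \<le> 1" using level_bound[OF c B(1,3)] .
    moreover have "real (card B) > 1 / c" using B(2) by linarith
    hence "real (card B) * c > 1" using c by (simp add: field_simps)
    ultimately show False by simp
  qed
  moreover have "real (card {x. c \<le> pmf Q x}) * c \<le> 1" by (rule level_bound[OF c fin]) auto
  ultimately show ?thesis by simp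
qed

definition Lf :: "nat \<Rightarrow> real \<Rightarrow> 'a pmf \<Rightarrow> 'a \<Rightarrow> nat" where
  "Lf a e P m = nat \<lceil>log 2 (real a / (e * pmf P m))\<rceil>"

definition Enc :: "nat \<Rightarrow> real \<Rightarrow> 'a::countable \<Rightarrow> (nat \<Rightarrow> bool) \<Rightarrow> 'a pmf \<Rightarrow> bool list" where
  "Enc a e m r P = hash r m (Lf a e P m)"

definition Dec :: "real \<Rightarrow> bool list \<Rightarrow> (nat \<Rightarrow> bool) \<Rightarrow> 'a::countable pmf \<Rightarrow> 'a" where
  "Dec e w r Q = (SOME x. (1/2)^length w / e \<le> pmf Q x \<and> hash r x (length w) = w)"

lemma slice_sets:
  fixes m :: "'a::countable" and P Q :: "'a pmf"
  assumes e: "0 < e"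
  shows "{r. Dec e (Enc a e m r P) r Q = m} \<in> sets coin_space"
proof -
  define l where "l = Lf a e P m"
  define S where "S = {x. (1/2)^l / e \<le> pmf Q x}"
  have "finite S" unfolding S_def using level_fin[of "(1/2)^l / e" Q] e by simp
  define J where "J = (\<lambda>(x,i). enc x i) ` ((insert m S) \<times> {..<l})"
  have finJ: "finite J" unfolding J_def using \<open>finite S\<close> by auto
  have key: "Dec e (Enc a e m r P) r Q = Dec e (Enc a e m r' P) r' Q" if "restrict r J = restrict r' J" for r r'
  proof -
    have rr: "r (enc x i) = r' (enc x i)" if "x \<in> insert m S" "i < l" for x i
    proof -
      have "enc x i \<in> J" unfolding J_def by (rule image_eqI[of _ _ "(x,i)"]) (use that in auto)
      thus ?thesis using \<open>restrict r J = restrict r' J\<close> by (metis restrict_apply')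
    qed
    have eqf: "(\<lambda>x. (1/2)^l / e \<le> pmf Q x \<and> hash r x l = hash r m l) =
          (\<lambda>x. (1/2)^l / e \<le> pmf Q x \<and> hash r' x l = hash r' m l)"
    proof
      fix x
      show "((1/2)^l / e \<le> pmf Q x \<and> hash r x l = hash r m l) =
          ((1/2)^l / e \<le> pmf Q x \<and> hash r' x l = hash r' m l)"
      proof (cases "x \<in> S")
        case True
        have "hash r x l = hash r' x l" "hash r m l = hash r' m l"
          by (rule hash_cong, use rr True in auto)+
        thus ?thesis by simp
      next
        case False thus ?thesis unfolding S_def by simp
      qed
    qed
    have dr: "Dec e (Enc a e m r P) r Q = (SOME x. (1/2)^l / e \<le> pmf Q x \<and> hash r x l = hash r m l)"
      for r unfolding Dec_def Enc_def l_def[symmetric] length_hash by (rule refl)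
    show ?thesis unfolding dr by (rule arg_cong[where f=Eps, OF eqf])
  qed
  have inv: "r' \<in> {r. Dec e (Enc a e m r P) r Q = m}"
    if "restrict r J = restrict r' J" "r \<in> {r. Dec e (Enc a e m r P) r Q = m}" for r r'
    using key[OF that(1)] that(2) by simp
  show ?thesis by (rule conjunct1[OF cyl[OF finJ inv]])
qed

lemma level_m:
  assumes e: "0 < e" and a: "a \<ge> 1" and pm: "pmf P m > 0"
  shows "(1/2::real)^(Lf a e P m) / e \<le> pmf P m / real a"
proof -
  define l where "l = Lf a e P m"
  define p where "p = pmf P m"
  define y where "y = real a / (e * p)"
  have p: "p > 0" using pm p_def by simp
  have ap: "real a > 0" using a by simp
  have y: "y > 0" unfolding y_def using e p ap by simp
  have "log 2 y \<le> real l" unfolding l_def Lf_def y_def p_def by (rule real_nat_ceiling_ge)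
  hence "y \<le> 2 powr real l" using y by (simp add: log_le_iff)
  hence "y \<le> 2 ^ l" by (simp add: powr_realpow)
  hence "real a \<le> 2 ^ l * (e * p)" unfolding y_def using e p by (simp add: pos_divide_le_eq)
  hence "1 / (2^l * e) \<le> p / real a" using e p ap by (simp add: field_simps)
  thus ?thesis unfolding l_def[symmetric] p_def[symmetric] by (simp add: power_one_over)
qed

lemma slice_prob:
  fixes m :: "'a::countable" and P Q :: "'a pmf"
  assumes e: "0 < e" "e < 1" and a: "a \<ge> 1" and pm: "pmf P m > 0"
    and Q: "\<forall>x. pmf Q x \<ge> pmf P x / real a"
  shows "emeasure coin_space {r. Dec e (Enc a e m r P) r Q = m} \<ge> ennreal (1 - e)"
proof -
  interpret coin: prob_space coin_space by (rule coin_prob)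
  define l where "l = Lf a e P m"
  define c where "c = (1/2::real)^l / e"
  define S where "S = {x. c \<le> pmf Q x}"
  have cpos: "c > 0" unfolding c_def using e by simp
  have finS: "finite S" and cardS: "real (card S) * c \<le> 1"
    using level_fin[OF cpos, of Q] unfolding S_def by auto
  have "c \<le> pmf P m / real a" unfolding c_def l_def by (rule level_m[OF e(1) a pm])
  also have "\<dots> \<le> pmf Q m" using Q by blast
  finally have mS: "m \<in> S" unfolding S_def by simp
  define B where "B x = {r. hash r x l = hash r m l}" for x :: 'a
  have Bs: "B x \<in> sets coin_space" "measure coin_space (B x) \<le> (1/2)^l" if "x \<noteq> m" for x
  proof -
    note cc = collision[OF that, of l]
    show "B x \<in> sets coin_space" unfolding B_def using cc by blast
    have "ennreal (measure coin_space (B x)) \<le> ennreal ((1/2)^l)"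
      using cc unfolding B_def by (simp add: coin.emeasure_eq_measure)
    thus "measure coin_space (B x) \<le> (1/2)^l" by (simp add: ennreal_le_iff)
  qed
  define U where "U = (\<Union>x\<in>S-{m}. B x)"
  have Usets: "U \<in> sets coin_space" unfolding U_def using finS Bs(1) by (intro sets.finite_UN) auto
  have "measure coin_space U \<le> (\<Sum>x\<in>S-{m}. measure coin_space (B x))"
    unfolding U_def using finS Bs(1) by (intro coin.finite_measure_subadditive_finite) auto
  also have "\<dots> \<le> real (card (S-{m})) * (1/2)^l"
    using Bs(2) by (intro sum_bounded_above) auto
  also have "\<dots> \<le> real (card S) * (1/2)^l"
    using finS by (intro mult_right_mono) (auto intro: card_mono)
  also have "\<dots> = real (card S) * c * e" unfolding c_def using e by simp
  also have "\<dots> \<le> e" using cardS e by (simp add: mult_le_cancel_right1)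
  finally have mU: "measure coin_space U \<le> e" .
  have sub: "UNIV - U \<subseteq> {r. Dec e (Enc a e m r P) r Q = m}"
  proof
    fix r assume r: "r \<in> UNIV - U"
    define f where "f x = (c \<le> pmf Q x \<and> hash r x l = hash r m l)" for x
    have dr: "Dec e (Enc a e m r P) r Q = Eps f"
      unfolding Dec_def Enc_def l_def[symmetric] length_hash f_def c_def by (rule refl)
    have fm: "f m" unfolding f_def using mS S_def by simp
    have fE: "f (Eps f)" using someI[of f, OF fm] .
    have "Eps f = m"
    proof (rule ccontr)
      assume ne: "Eps f \<noteq> m"
      have "Eps f \<in> S" using fE unfolding f_def S_def by simp
      moreover have "r \<in> B (Eps f)" using fE unfolding f_def B_def by simp
      ultimately have "r \<in> U" unfolding U_def using ne by blast
      thus False using r by blast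
    qed
    thus "r \<in> {r. Dec e (Enc a e m r P) r Q = m}" using dr by simp
  qed
  have "ennreal (1 - e) \<le> ennreal (1 - measure coin_space U)" using mU by (intro ennreal_leI) simp
  also have "1 - measure coin_space U = measure coin_space (UNIV - U)"
    using coin.prob_compl[OF Usets] by simp
  also have "ennreal \<dots> = emeasure coin_space (UNIV - U)"
    by (simp add: coin.emeasure_eq_measure)
  also have "\<dots> \<le> emeasure coin_space {r. Dec e (Enc a e m r P) r Q = m}"
    by (rule emeasure_mono[OF sub slice_sets[OF e(1)]])
  finally show ?thesis .
qed

lemma Lf_bound:
  assumes e: "0 < e" "e < 1" and a: "a \<ge> 1" and pm: "pmf P m > 0"
  shows "real (Lf a e P m) \<le> log 2 (1 / pmf P m) + (log 2 (real a) + log 2 (1/e) + 1)"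
proof -
  define p where "p = pmf P m"
  have p: "0 < p" "p \<le> 1" using pm pmf_le_1 unfolding p_def by auto
  have ap: "real a \<ge> 1" using a by simp
  define y where "y = real a / (e * p)"
  have "e * p \<le> 1" using e p by (simp add: mult_le_one)
  hence y1: "y \<ge> 1" unfolding y_def using e p ap
    by (simp add: le_divide_eq)
  have ly: "log 2 y \<ge> 0" using y1 by simp
  have "log 2 y = log 2 (real a) + log 2 (1/e) + log 2 (1/p)"
    unfolding y_def using e p ap by (simp add: log_divide log_mult)
  moreover have "real (nat \<lceil>log 2 y\<rceil>) \<le> log 2 y + 1"
  proof -
    have "real (nat \<lceil>log 2 y\<rceil>) = real_of_int \<lceil>log 2 y\<rceil>" using ly by simp
    also have "\<dots> \<le> log 2 y + 1" by (rule of_int_ceiling_le_add_one)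
    finally show ?thesis .
  qed
  ultimately show ?thesis unfolding Lf_def y_def[symmetric] p_def[symmetric] y_def[symmetric] by simp
qed

theorem theorem3:
  fixes \<alpha> :: nat and \<epsilon> :: real
  assumes "\<alpha> \<ge> 1" and "0 < \<epsilon>" and "\<epsilon> < 1"
  shows "\<exists>(E :: 'a::countable \<Rightarrow> nat \<Rightarrow> (nat \<Rightarrow> bool) \<Rightarrow> 'a pmf \<Rightarrow> bool list)
            (D :: bool list \<Rightarrow> nat \<Rightarrow> (nat \<Rightarrow> bool) \<Rightarrow> 'a pmf \<Rightarrow> 'a).
          \<forall>P :: 'a pmf.
            (\<lambda>(m, r). real (length (E m \<alpha> r P)))
               \<in> borel_measurable (measure_pmf P \<Otimes>\<^sub>M coin_space)
          \<and> (\<integral>\<^sup>+ (m, r). ennreal (real (length (E m \<alpha> r P))) \<partial>(measure_pmf P \<Otimes>\<^sub>M coin_space))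
               \<le> entropy2 P + ennreal (log 2 (real \<alpha>) + log 2 (1 / \<epsilon>) + 1)
          \<and> (\<forall>Q :: 'a pmf. (\<forall>x. pmf Q x \<ge> pmf P x / real \<alpha>) \<longrightarrow>
               {(m, r). D (E m \<alpha> r P) \<alpha> r Q = m} \<in> sets (measure_pmf P \<Otimes>\<^sub>M coin_space)
             \<and> emeasure (measure_pmf P \<Otimes>\<^sub>M coin_space) {(m, r). D (E m \<alpha> r P) \<alpha> r Q = m}
                 \<ge> ennreal (1 - \<epsilon>))"
proof -
  interpret coin: prob_space coin_space by (rule coin_prob)
  define E :: "'a \<Rightarrow> nat \<Rightarrow> (nat \<Rightarrow> bool) \<Rightarrow> 'a pmf \<Rightarrow> bool list"
    where "E m a r P = Enc \<alpha> \<epsilon> m r P" for m a r P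
  define D :: "bool list \<Rightarrow> nat \<Rightarrow> (nat \<Rightarrow> bool) \<Rightarrow> 'a pmf \<Rightarrow> 'a"
    where "D w a r Q = Dec \<epsilon> w r Q" for w a r Q
  have sp1: "emeasure coin_space UNIV = 1" using coin.emeasure_space_1 by simp
  define K where "K = log 2 (real \<alpha>) + log 2 (1 / \<epsilon>) + 1"
  have K: "K \<ge> 0" unfolding K_def using assms by simp
  have "\<forall>P :: 'a pmf.
            (\<lambda>(m, r). real (length (E m \<alpha> r P)))
               \<in> borel_measurable (measure_pmf P \<Otimes>\<^sub>M coin_space)
          \<and> (\<integral>\<^sup>+ (m, r). ennreal (real (length (E m \<alpha> r P))) \<partial>(measure_pmf P \<Otimes>\<^sub>M coin_space))
               \<le> entropy2 P + ennreal (log 2 (real \<alpha>) + log 2 (1 / \<epsilon>) + 1)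
          \<and> (\<forall>Q :: 'a pmf. (\<forall>x. pmf Q x \<ge> pmf P x / real \<alpha>) \<longrightarrow>
               {(m, r). D (E m \<alpha> r P) \<alpha> r Q = m} \<in> sets (measure_pmf P \<Otimes>\<^sub>M coin_space)
             \<and> emeasure (measure_pmf P \<Otimes>\<^sub>M coin_space) {(m, r). D (E m \<alpha> r P) \<alpha> r Q = m}
                 \<ge> ennreal (1 - \<epsilon>))"
  proof (intro allI conjI impI)
    fix P :: "'a pmf"
    have feq: "(\<lambda>(m, r). real (length (E m \<alpha> r P))) = (\<lambda>x. real (Lf \<alpha> \<epsilon> P (fst x)))"
      by (auto simp: E_def Enc_def)
    have feq2: "(\<lambda>(m, r). ennreal (real (length (E m \<alpha> r P)))) = (\<lambda>x. ennreal (real (Lf \<alpha> \<epsilon> P (fst x))))"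
      by (auto simp: E_def Enc_def)
    have m1: "(\<lambda>m. real (Lf \<alpha> \<epsilon> P m)) \<in> borel_measurable (measure_pmf P)" by simp
    have m2: "(\<lambda>m. ennreal (real (Lf \<alpha> \<epsilon> P m))) \<in> borel_measurable (measure_pmf P)" by simp
    show "(\<lambda>(m, r). real (length (E m \<alpha> r P))) \<in> borel_measurable (measure_pmf P \<Otimes>\<^sub>M coin_space)"
      unfolding feq by (rule measurable_compose[OF measurable_fst m1])
    have mf2: "(\<lambda>x. ennreal (real (Lf \<alpha> \<epsilon> P (fst x)))) \<in> borel_measurable (measure_pmf P \<Otimes>\<^sub>M coin_space)"
      by (rule measurable_compose[OF measurable_fst m2])
    have "(\<integral>\<^sup>+ (m, r). ennreal (real (length (E m \<alpha> r P))) \<partial>(measure_pmf P \<Otimes>\<^sub>M coin_space))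
        = (\<integral>\<^sup>+ x. ennreal (real (Lf \<alpha> \<epsilon> P (fst x))) \<partial>(measure_pmf P \<Otimes>\<^sub>M coin_space))"
      unfolding feq2 by (rule refl)
    also have "\<dots> = (\<integral>\<^sup>+ m. \<integral>\<^sup>+ r. ennreal (real (Lf \<alpha> \<epsilon> P (fst (m, r)))) \<partial>coin_space \<partial>measure_pmf P)"
      by (rule sigma_finite_measure.nn_integral_fst[symmetric, OF prob_space_imp_sigma_finite[OF coin_prob] mf2])
    also have "\<dots> = (\<integral>\<^sup>+ m. ennreal (real (Lf \<alpha> \<epsilon> P m)) \<partial>measure_pmf P)"
      by (simp add: sp1)
    also have "\<dots> \<le> (\<integral>\<^sup>+ m. ennreal (log 2 (1 / pmf P m)) + ennreal K \<partial>measure_pmf P)"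
    proof (rule nn_integral_mono_AE)
      show "AE m in measure_pmf P. ennreal (real (Lf \<alpha> \<epsilon> P m)) \<le> ennreal (log 2 (1 / pmf P m)) + ennreal K"
        unfolding AE_measure_pmf_iff
      proof
        fix m assume "m \<in> set_pmf P"
        hence pm: "pmf P m > 0" by (simp add: set_pmf_iff pmf_nonneg order_le_neq_trans)
        have "1 \<le> 1 / pmf P m" using pm pmf_le_1[of P m] by (simp add: field_simps)
        hence l0: "0 \<le> log 2 (1 / pmf P m)" using pm by simp
        have "real (Lf \<alpha> \<epsilon> P m) \<le> log 2 (1 / pmf P m) + K"
          unfolding K_def by (rule Lf_bound) (use assms pm in auto)
        hence "ennreal (real (Lf \<alpha> \<epsilon> P m)) \<le> ennreal (log 2 (1 / pmf P m) + K)"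
          by (rule ennreal_leI)
        thus "ennreal (real (Lf \<alpha> \<epsilon> P m)) \<le> ennreal (log 2 (1 / pmf P m)) + ennreal K"
          using l0 K by (simp add: ennreal_plus)
      qed
    qed
    also have "\<dots> = (\<integral>\<^sup>+ m. ennreal (log 2 (1 / pmf P m)) \<partial>measure_pmf P) + ennreal K"
      by (subst nn_integral_add) (auto simp: measure_pmf.emeasure_space_1)
    also have "(\<integral>\<^sup>+ m. ennreal (log 2 (1 / pmf P m)) \<partial>measure_pmf P) = entropy2 P"
      unfolding entropy2_def nn_integral_measure_pmf
      by (rule nn_integral_cong) (simp add: ennreal_mult'[OF pmf_nonneg])
    finally show "(\<integral>\<^sup>+ (m, r). ennreal (real (length (E m \<alpha> r P))) \<partial>(measure_pmf P \<Otimes>\<^sub>M coin_space))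
               \<le> entropy2 P + ennreal (log 2 (real \<alpha>) + log 2 (1 / \<epsilon>) + 1)"
      unfolding K_def .
  next
    fix P Q :: "'a pmf"
    assume Q: "\<forall>x. pmf Q x \<ge> pmf P x / real \<alpha>"
    define sl where "sl m = {r. Dec \<epsilon> (Enc \<alpha> \<epsilon> m r P) r Q = m}" for m
    have Aeq: "{(m, r). D (E m \<alpha> r P) \<alpha> r Q = m} = (\<Union>m\<in>UNIV. {m} \<times> sl m)"
      by (auto simp: D_def E_def sl_def)
    have sls: "sl m \<in> sets coin_space" for m unfolding sl_def by (rule slice_sets) (use assms in simp)
    show Asets: "{(m, r). D (E m \<alpha> r P) \<alpha> r Q = m} \<in> sets (measure_pmf P \<Otimes>\<^sub>M coin_space)"
      unfolding Aeq by (rule sets.countable_UN') (auto intro: pair_measureI sls)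
    have "ennreal (1 - \<epsilon>) = (\<integral>\<^sup>+ m. ennreal (1 - \<epsilon>) \<partial>measure_pmf P)"
      by (simp add: measure_pmf.emeasure_space_1)
    also have "\<dots> \<le> (\<integral>\<^sup>+ m. emeasure coin_space (sl m) \<partial>measure_pmf P)"
    proof (rule nn_integral_mono_AE)
      show "AE m in measure_pmf P. ennreal (1 - \<epsilon>) \<le> emeasure coin_space (sl m)"
        unfolding AE_measure_pmf_iff
      proof
        fix m assume "m \<in> set_pmf P"
        hence pm: "pmf P m > 0" by (simp add: set_pmf_iff pmf_nonneg order_le_neq_trans)
        show "ennreal (1 - \<epsilon>) \<le> emeasure coin_space (sl m)"
          unfolding sl_def by (rule slice_prob) (use assms pm Q in auto)
      qed
    qed
    also have "\<dots> = (\<integral>\<^sup>+ m. emeasure coin_space (Pair m -` {(m, r). D (E m \<alpha> r P) \<alpha> r Q = m}) \<partial>measure_pmf P)"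
      by (rule nn_integral_cong) (auto simp: sl_def D_def E_def intro!: arg_cong[where f="emeasure coin_space"])
    also have "\<dots> = emeasure (measure_pmf P \<Otimes>\<^sub>M coin_space) {(m, r). D (E m \<alpha> r P) \<alpha> r Q = m}"
      by (rule sigma_finite_measure.emeasure_pair_measure_alt[symmetric, OF prob_space_imp_sigma_finite[OF coin_prob] Asets])
    finally show "emeasure (measure_pmf P \<Otimes>\<^sub>M coin_space) {(m, r). D (E m \<alpha> r P) \<alpha> r Q = m}
                 \<ge> ennreal (1 - \<epsilon>)" .
  qed
  thus ?thesis by blast
qed

end
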